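(* Let $k\ge2$, $\sigma_i=\frac{i(k-i)}2$, and let $\boldsymbol\xi(\tau)=(\xi_1,\dots,\xi_k)(\tau)$, $\tau\in[0,\tau_\infty)$, be a solution of the system $\dot\xi_i=b_i-b_{i+1}$ ($i=1,\dots,k$), where $b_1=b_{k+1}=0$ and $b_i=\sigma_{i-1}(e^{-(\xi_i-\xi_{i-1})}-1)$ for $i=2,\dots,k$, with $\sum_{i=1}^k\xi_i(0)=0$ and $\boldsymbol\xi(\tau)\ne0$ for all $\tau\in[0,\tau_\infty)$. Let $B(\tau)=\max_{1\le i\le k+1}b_i(\tau)$ and $J(\tau)=\{i\in\{1,\dots,k+1\}: b_i(\tau)=B(\tau)\}$. Then for every $\tau_0\in[0,\tau_\infty)$ there exists $\varepsilon>0$ such that for all $i\in J(\tau_0)\cap\{2,\dots,k\}$ and all $t\in(\tau_0,\tau_0+\varepsilon)$, $b_i(t)<B(\tau_0)$. *)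

theory Defs
  imports "HOL-Analysis.Analysis"
begin

definition sigma :: "nat \<Rightarrow> nat \<Rightarrow> real" where
  "sigma k i = real i * (real k - real i) / 2"

definition bfun :: "nat \<Rightarrow> (real \<Rightarrow> nat \<Rightarrow> real) \<Rightarrow> real \<Rightarrow> nat \<Rightarrow> real" where
  "bfun k xi t i = (if 2 \<le> i \<and> i \<le> k
      then sigma k (i - 1) * (exp (- (xi t i - xi t (i - 1))) - 1) else 0)"

definition Bmax :: "nat \<Rightarrow> (real \<Rightarrow> nat \<Rightarrow> real) \<Rightarrow> real \<Rightarrow> real" where
  "Bmax k xi t = Max ((\<lambda>i. bfun k xi t i) ` {1..k+1})"

definition Jset :: "nat \<Rightarrow> (real \<Rightarrow> nat \<Rightarrow> real) \<Rightarrow> real \<Rightarrow> nat set" where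
  "Jset k xi t = {i \<in> {1..k+1}. bfun k xi t i = Bmax k xi t}"

end

theory Submission
  imports Defs
begin

lemma deriv_left_max:
  fixes f :: "real \<Rightarrow> real"
  assumes d: "(f has_real_derivative l) (at x within {a..x})" and ax: "a < x"
    and le: "\<And>y. a \<le> y \<Longrightarrow> y < x \<Longrightarrow> f y \<le> f x"
  shows "l \<ge> 0"
proof -
  from d have "((\<lambda>y. (f y - f x) / (y - x)) \<longlongrightarrow> l) (at_left x)"
    using at_within_Icc_at_left[OF ax] by (simp add: has_field_derivative_iff)
  moreover have "\<forall>\<^sub>F y in at_left x. 0 \<le> (f y - f x) / (y - x)"
    using eventually_at_left_real[OF ax]
  proof (rule eventually_mono)
    fix y assume "y \<in> {a<..<x}"
    then have "f y - f x \<le> 0" "y - x < 0" using le by auto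
    then show "0 \<le> (f y - f x) / (y - x)" by (simp add: divide_nonpos_neg)
  qed
  ultimately show ?thesis by (rule tendsto_lowerbound) (simp add: trivial_limit_at_left_real)
qed

lemma left_limit_le:
  fixes f :: "real \<Rightarrow> real"
  assumes c: "continuous_on {a..x} f" and ax: "a < x"
    and le: "\<And>y. a \<le> y \<Longrightarrow> y < x \<Longrightarrow> f y \<le> c"
  shows "f x \<le> c"
proof -
  have "continuous (at x within {a..x}) f" using c ax
    by (simp add: continuous_on_eq_continuous_within)
  then have "(f \<longlongrightarrow> f x) (at_left x)"
    using at_within_Icc_at_left[OF ax] by (simp add: continuous_within)
  moreover have "\<forall>\<^sub>F y in at_left x. f y \<le> c"
    using eventually_at_left_real[OF ax] by (rule eventually_mono) (use le in auto)
  ultimately show ?thesis by (rule tendsto_upperbound) (simp add: trivial_limit_at_left_real)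
qed

lemma sigma_pos: "2 \<le> i \<Longrightarrow> i \<le> k \<Longrightarrow> sigma k (i - 1) > 0"
  unfolding sigma_def by (auto simp: of_nat_diff)

lemma alg_helper:
  fixes b s E p q :: real
  assumes "b + s = s * E"
  shows "E * (p + q - 2 * b) * s = (- b - s) * (2 * b - p - q)"
proof -
  have "(- b - s) * (2 * b - p - q) = (b + s) * (p + q - 2 * b)" by (simp add: algebra_simps)
  also have "\<dots> = s * E * (p + q - 2 * b)" using assms by simp
  finally show ?thesis by (simp add: mult_ac)
qed

lemma negmul_helper:
  fixes c X :: real
  assumes "0 \<le> (- c) * X" "0 < c"
  shows "X \<le> 0"
proof (rule ccontr)
  assume "\<not> X \<le> 0"
  then have "c * X > 0" using assms(2) by simp
  then show False using assms(1) by simp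
qed

lemma main:
  fixes k :: nat and xi :: "real \<Rightarrow> nat \<Rightarrow> real" and tau_inf :: ereal
  assumes k2: "k \<ge> 2"
    and ode: "\<And>t i. 0 \<le> t \<Longrightarrow> ereal t < tau_inf \<Longrightarrow> i \<in> {1..k} \<Longrightarrow>
      ((\<lambda>s. xi s i) has_real_derivative (bfun k xi t i - bfun k xi t (i + 1)))
        (at t within {s. 0 \<le> s \<and> ereal s < tau_inf})"
    and init: "(\<Sum>i=1..k. xi 0 i) = 0"
    and nonzero: "\<And>t. 0 \<le> t \<Longrightarrow> ereal t < tau_inf \<Longrightarrow> (\<exists>i\<in>{1..k}. xi t i \<noteq> 0)"
    and t0: "0 \<le> tau0" and t01: "tau0 < t1" and t1: "ereal t1 < tau_inf"
    and i0: "i0 \<in> {2..k}"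
  shows "bfun k xi t1 i0 < Bmax k xi tau0"
proof -
  define b where "b = bfun k xi"
  define B where "B = Bmax k xi tau0"
  define I where "I = {tau0..t1}"
  have sub0: "{0..t1} \<subseteq> {s. 0 \<le> s \<and> ereal s < tau_inf}" using t1
    by auto (meson ereal_less_eq(3) le_less_trans)
  have subI: "I \<subseteq> {0..t1}" using t0 unfolding I_def by auto
  have dxi0: "((\<lambda>s. xi s i) has_real_derivative (b s i - b s (i + 1))) (at s within {0..t1})"
    if "s \<in> {0..t1}" "i \<in> {1..k}" for s i
  proof -
    have "ereal s < tau_inf" "0 \<le> s" using sub0 that by auto
    then show ?thesis using ode[of s i] that sub0 unfolding b_def
      by (auto intro: has_field_derivative_subset)
  qed
  have dxiI: "((\<lambda>s. xi s i) has_real_derivative (b s i - b s (i + 1))) (at s within T)"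
    if "s \<in> T" "T \<subseteq> I" "i \<in> {1..k}" for s i T
  proof -
    have "s \<in> {0..t1}" "T \<subseteq> {0..t1}" using that subI by auto
    then show ?thesis using has_field_derivative_subset[OF dxi0[of s i], of T] that by auto
  qed
  have cxi: "continuous_on T (\<lambda>s. xi s i)" if "T \<subseteq> I" "i \<in> {1..k}" for T i
    using dxiI that by (intro DERIV_continuous_on) blast
  have bcont: "continuous_on T (\<lambda>s. b s i)" if "T \<subseteq> I" for T i
  proof (cases "2 \<le> i \<and> i \<le> k")
    case True
    have "continuous_on T (\<lambda>s. xi s i)" "continuous_on T (\<lambda>s. xi s (i - 1))"
      using cxi[OF that, of i] cxi[OF that, of "i - 1"] True by (simp_all, linarith)
    then show ?thesis using True unfolding b_def bfun_def
      by (auto intro!: continuous_intros)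
  next
    case False
    then have "(\<lambda>s. b s i) = (\<lambda>s. 0)" unfolding b_def bfun_def by auto
    then show ?thesis by (metis continuous_on_const)
  qed
  have bder: "((\<lambda>s. b s i) has_real_derivative
      (-(b s i + sigma k (i - 1)) * (2 * b s i - b s (i - 1) - b s (i + 1)))) (at s within T)"
    if "s \<in> T" "T \<subseteq> I" "i \<in> {2..k}" for s i T
  proof -
    have h1: "((\<lambda>s. xi s i) has_real_derivative (b s i - b s (i + 1))) (at s within T)"
      using dxiI that by auto
    have h2: "((\<lambda>s. xi s (i - 1)) has_real_derivative (b s (i - 1) - b s i)) (at s within T)"
    proof -
      have im: "i - 1 \<in> {1..k}" "i - 1 + 1 = i" using that(3) by auto
      show ?thesis using dxiI[OF that(1,2) im(1)] unfolding im(2) .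
    qed
    have fe: "(\<lambda>s. b s i) = (\<lambda>s. sigma k (i - 1) * (exp (- (xi s i - xi s (i - 1))) - 1))"
      using that unfolding b_def bfun_def by auto
    have bi: "b s i + sigma k (i - 1) = sigma k (i - 1) * exp (- (xi s i - xi s (i - 1)))"
      using fun_cong[OF fe, of s] by (simp add: algebra_simps)
    show ?thesis unfolding fe
      apply (rule derivative_eq_intros h1 h2 | simp)+
      using bi by (intro alg_helper) simp
  qed
  have cpos: "b s i + sigma k (i - 1) > 0" if "i \<in> {2..k}" for s i
  proof -
    have "b s i + sigma k (i - 1) = sigma k (i - 1) * exp (- (xi s i - xi s (i - 1)))"
      using that unfolding b_def bfun_def by (simp add: algebra_simps)
    then show ?thesis using sigma_pos[of i k] that by simp
  qed
  have b1: "b s 1 = 0" and bk: "b s (k + 1) = 0" for s unfolding b_def bfun_def by auto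
  have fin: "finite ((\<lambda>i. b tau0 i) ` {1..k+1})" by simp
  have Bge: "b tau0 j \<le> B" if "j \<in> {1..k+1}" for j
    unfolding B_def Bmax_def b_def[symmetric] using fin that by auto
  have B0: "B \<ge> 0" using Bge[of 1] b1 by simp
  have ti: "t1 \<in> I" "tau0 \<in> I" using t01 unfolding I_def by auto
  \<comment> \<open>weak maximum principle\<close>
  have strict: "b s j < B + d * (1 + s - tau0)"
    if d: "d > 0" and s: "s \<in> I" and j: "j \<in> {1..k+1}" for d s j
  proof (rule ccontr)
    assume nc: "\<not> ?thesis"
    define g where "g = (\<lambda>s. B + d * (1 + s - tau0))"
    define S where "S = (\<Union>j\<in>{1..k+1}. {s \<in> I. g s \<le> b s j})"
    have gc: "continuous_on I g" unfolding g_def by (intro continuous_intros)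
    have "closed S" unfolding S_def
      by (intro closed_UN finite_atLeastAtMost ballI continuous_on_closed_Collect_le gc bcont)
         (auto simp: I_def)
    moreover have "bounded S" by (rule bounded_subset[of I]) (auto simp: S_def I_def)
    ultimately have cS: "compact S" by (simp add: compact_eq_bounded_closed)
    have "s \<in> S" using nc s j unfolding S_def g_def by force
    then obtain ts where tsS: "ts \<in> S" and tsmin: "\<And>t. t \<in> S \<Longrightarrow> ts \<le> t"
      using compact_attains_inf[OF cS] by blast
    from tsS obtain j0 where j0: "j0 \<in> {1..k+1}" and tsI: "ts \<in> I" and gj0: "g ts \<le> b ts j0"
      unfolding S_def by blast
    have "tau0 \<noteq> ts"
    proof
      assume "tau0 = ts"
      then have "g ts = B + d" unfolding g_def by simp
      with Bge[OF j0] gj0 d \<open>tau0 = ts\<close> show False by simp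
    qed
    then have tts: "tau0 < ts" using tsI unfolding I_def by auto
    have below: "b y j < g y" if "tau0 \<le> y" "y < ts" "j \<in> {1..k+1}" for y j
    proof (rule ccontr)
      assume "\<not> b y j < g y"
      then have "y \<in> S" using that tsI unfolding S_def I_def by force
      with tsmin[of y] that show False by simp
    qed
    have sub_ts: "{tau0..ts} \<subseteq> I" using tsI unfolding I_def by auto
    have atmost: "b ts j - g ts \<le> 0" if "j \<in> {1..k+1}" for j
      by (rule left_limit_le[OF _ tts, where f = "\<lambda>y. b y j - g y"])
         (auto intro!: continuous_intros bcont[OF sub_ts] continuous_on_subset[OF gc sub_ts]
               dest: below[OF _ _ that] simp: less_imp_le)
    have eq: "b ts j0 = g ts" using atmost[OF j0] gj0 by simp
    have "g ts > B" unfolding g_def using tts d by (simp add: add_pos_pos)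
    then have "b ts j0 \<noteq> 0" using eq B0 by simp
    then have j0': "j0 \<in> {2..k}" using j0 b1[of ts] bk[of ts]
      by (cases "j0 = 1"; cases "j0 = k + 1") auto
    have nb: "b ts (j0 - 1) \<le> g ts" "b ts (j0 + 1) \<le> g ts"
      using atmost[of "j0 - 1"] atmost[of "j0 + 1"] j0' by (auto, linarith)
    define D where "D = -(b ts j0 + sigma k (j0 - 1)) * (2 * b ts j0 - b ts (j0 - 1) - b ts (j0 + 1))"
    have dD: "((\<lambda>y. b y j0 - g y) has_real_derivative (D - d)) (at ts within {tau0..ts})"
      unfolding D_def g_def
      by (rule derivative_eq_intros bder[OF _ sub_ts j0'] | simp add: tts less_imp_le)+
    have "D - d \<ge> 0"
      by (rule deriv_left_max[OF dD tts]) (use below[OF _ _ j0] eq in \<open>auto simp: less_imp_le\<close>)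
    moreover have "D \<le> 0" unfolding D_def using cpos[OF j0', of ts] nb eq
      by (intro mult_nonpos_nonneg) auto
    ultimately show False using d by simp
  qed
  have wmp: "b s j \<le> B" if s: "s \<in> I" and j: "j \<in> {1..k+1}" for s j
  proof (rule ccontr)
    assume "\<not> b s j \<le> B"
    then have pos: "b s j - B > 0" by simp
    have s1: "1 + s - tau0 > 0" using s unfolding I_def by auto
    define d where "d = (b s j - B) / (2 * (1 + s - tau0))"
    have "d > 0" unfolding d_def using pos s1 by simp
    have "d * (1 + s - tau0) = (b s j - B) / 2" unfolding d_def using s1 by (simp add: field_simps)
    with strict[OF \<open>d > 0\<close> s j] have "b s j < B + (b s j - B) / 2" by simp
    moreover have "(b s j - B) / 2 < b s j - B" using pos by simp
    ultimately show False by linarith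
  qed
  have cons: "(\<Sum>i=1..k. xi s i) = 0" if "s \<in> {0..t1}" for s
  proof -
    have "\<exists>c. \<forall>x\<in>{0..t1}. (\<Sum>i=1..k. xi x i) = c"
    proof (rule has_field_derivative_zero_constant)
      fix x assume x: "x \<in> {0..t1}"
      have "((\<lambda>x. \<Sum>i=1..k. xi x i) has_real_derivative (\<Sum>i=1..k. b x i - b x (i + 1))) (at x within {0..t1})"
        by (rule DERIV_sum) (use dxi0 x in auto)
      moreover have "(\<Sum>i=1..k. b x i - b x (i + 1)) = 0"
      proof -
        have "(\<Sum>i=1..k. b x i - b x (i + 1)) = - (\<Sum>i=1..k. b x (Suc i) - b x i)"
          by (simp add: sum_negf[symmetric])
        also have "\<dots> = 0" using k2 by (subst sum_Suc_diff) (use b1[of x] bk[of x] in auto)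
        finally show ?thesis .
      qed
      ultimately show "((\<lambda>x. \<Sum>i=1..k. xi x i) has_real_derivative 0) (at x within {0..t1})" by simp
    qed simp
    then obtain c where "\<forall>x\<in>{0..t1}. (\<Sum>i=1..k. xi x i) = c" by blast
    moreover have "0 \<in> {0..t1}" using t0 t01 by auto
    ultimately show ?thesis using init that by force
  qed
  \<comment> \<open>strong maximum principle at t1\<close>
  show ?thesis
  proof (rule ccontr)
    assume "\<not> bfun k xi t1 i0 < Bmax k xi tau0"
    then have "b t1 i0 \<ge> B" unfolding b_def B_def by simp
    then have Pi0: "b t1 i0 = B" using wmp[OF ti(1), of i0] i0 by simp
    have spread: "b t1 (i - 1) = B \<and> b t1 (i + 1) = B" if i: "i \<in> {2..k}" and Pi: "b t1 i = B" for i
    proof -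
      have dd: "((\<lambda>s. b s i) has_real_derivative
        (-(b t1 i + sigma k (i - 1)) * (2 * b t1 i - b t1 (i - 1) - b t1 (i + 1)))) (at t1 within {tau0..t1})"
        by (rule bder) (use i t01 in \<open>auto simp: I_def\<close>)
      have "-(b t1 i + sigma k (i - 1)) * (2 * b t1 i - b t1 (i - 1) - b t1 (i + 1)) \<ge> 0"
        by (rule deriv_left_max[OF dd t01]) (use wmp Pi i in \<open>auto simp: I_def\<close>)
      then have "2 * b t1 i - b t1 (i - 1) - b t1 (i + 1) \<le> 0"
        using cpos[OF i, of t1] by (rule negmul_helper)
      moreover have "b t1 (i - 1) \<le> B" "b t1 (i + 1) \<le> B" using wmp[OF ti(1), of "i - 1"] wmp[OF ti(1), of "i + 1"] i by (auto, linarith)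
      ultimately show ?thesis using Pi by simp
    qed
    have down: "b t1 (i0 - m) = B" if "m \<le> i0 - 1" for m
      using that
    proof (induction m)
      case 0 then show ?case using Pi0 by simp
    next
      case (Suc m)
      then have im: "i0 - m \<in> {2..k}" using i0 by auto
      have "m \<le> i0 - 1" using Suc.prems by simp
      then have "b t1 (i0 - m) = B" by (rule Suc.IH)
      then have "b t1 (i0 - m - 1) = B" using spread[OF im] by blast
      moreover have "i0 - m - 1 = i0 - Suc m" by simp
      ultimately show ?case by metis
    qed
    have up: "b t1 (i0 + m) = B" if "i0 + m \<le> k + 1" for m
      using that
    proof (induction m)
      case 0 then show ?case using Pi0 by simp
    next
      case (Suc m)
      then have im: "i0 + m \<in> {2..k}" using i0 by auto
      have "i0 + m \<le> k + 1" using Suc.prems by simp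
      then have "b t1 (i0 + m) = B" by (rule Suc.IH)
      then have "b t1 (i0 + m + 1) = B" using spread[OF im] by blast
      then show ?case by (metis add_Suc_right Suc_eq_plus1)
    qed
    have "b t1 1 = B" using down[of "i0 - 1"] i0 by auto
    then have BB: "B = 0" using b1 by simp
    have allj: "b t1 j = 0" if "j \<in> {1..k+1}" for j
    proof (cases "j \<le> i0")
      case True then show ?thesis using down[of "i0 - j"] that BB by auto
    next
      case False then show ?thesis using up[of "j - i0"] that BB by auto
    qed
    have adj: "xi t1 i = xi t1 (i - 1)" if i: "i \<in> {2..k}" for i
    proof -
      have "sigma k (i - 1) * (exp (- (xi t1 i - xi t1 (i - 1))) - 1) = 0"
        using allj[of i] i unfolding b_def bfun_def by auto
      then have "exp (- (xi t1 i - xi t1 (i - 1))) = 1" using sigma_pos[of i k] i by auto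
      then show ?thesis by simp
    qed
    have same: "xi t1 i = xi t1 1" if "i \<in> {1..k}" for i
      using that
    proof (induction i)
      case 0 then show ?case by simp
    next
      case (Suc i)
      show ?case
      proof (cases "i = 0")
        case True then show ?thesis by simp
      next
        case False
        then have "Suc i \<in> {2..k}" using Suc.prems by auto
        then have "xi t1 (Suc i) = xi t1 i" using adj by fastforce
        moreover have "i \<in> {1..k}" using Suc.prems False by auto
        ultimately show ?thesis using Suc.IH by simp
      qed
    qed
    have "(\<Sum>i=1..k. xi t1 i) = (\<Sum>i=1..k. xi t1 1)" by (rule sum.cong) (simp, erule same)
    then have "(\<Sum>i=1..k. xi t1 i) = real k * xi t1 1" by simp
    then have "xi t1 1 = 0" using cons[of t1] k2 t0 t01 by auto
    then have "\<forall>i\<in>{1..k}. xi t1 i = 0" using same by metis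
    moreover have "0 \<le> t1" using t0 t01 by simp
    ultimately show False using nonzero[OF _ t1] by blast
  qed
qed
theorem lemma2p2:
  fixes k :: nat and xi :: "real \<Rightarrow> nat \<Rightarrow> real" and tau_inf :: ereal
  assumes "k \<ge> 2"
    and ode: "\<And>t i. 0 \<le> t \<Longrightarrow> ereal t < tau_inf \<Longrightarrow> i \<in> {1..k} \<Longrightarrow>
      ((\<lambda>s. xi s i) has_real_derivative (bfun k xi t i - bfun k xi t (i + 1)))
        (at t within {s. 0 \<le> s \<and> ereal s < tau_inf})"
    and init: "(\<Sum>i=1..k. xi 0 i) = 0"
    and nonzero: "\<And>t. 0 \<le> t \<Longrightarrow> ereal t < tau_inf \<Longrightarrow> (\<exists>i\<in>{1..k}. xi t i \<noteq> 0)"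
  shows "\<forall>tau0. 0 \<le> tau0 \<and> ereal tau0 < tau_inf \<longrightarrow>
    (\<exists>\<epsilon>>0. \<forall>i \<in> Jset k xi tau0 \<inter> {2..k}. \<forall>t. tau0 < t \<and> t < tau0 + \<epsilon> \<and> ereal t < tau_inf \<longrightarrow>
        bfun k xi t i < Bmax k xi tau0)"
proof (intro allI impI)
  fix tau0 assume h: "0 \<le> tau0 \<and> ereal tau0 < tau_inf"
  show "\<exists>\<epsilon>>0. \<forall>i \<in> Jset k xi tau0 \<inter> {2..k}. \<forall>t. tau0 < t \<and> t < tau0 + \<epsilon> \<and> ereal t < tau_inf \<longrightarrow>
        bfun k xi t i < Bmax k xi tau0"
    by (rule exI[of _ 1]) (use main[OF assms] h in auto)
qed

end
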